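(* Let $A=(V_\exists,V_\forall,E,E_f)$ be a fair game arena, $v\in V$, $s\in\Sigma$ and $t\in\Pi$. If $\mathsf{fair}_\forall(\mathsf{play}_v(s,t))$ holds, then there exists a $\forall$-fair strategy $\overline t\in\Pi^f$ with $\mathsf{play}_v(s,t)=\mathsf{play}_v(s,\overline t)$. Similarly, if $\mathsf{fair}_\exists(\mathsf{play}_v(s,t))$ holds, then there exists an $\exists$-fair strategy $\overline s\in\Sigma^f$ with $\mathsf{play}_v(s,t)=\mathsf{play}_v(\overline s,t)$.
   Context: A fair game arena $A=(V_\exists,V_\forall,E,E_f)$: finite node set $V=V_\exists\cup V_\forall$ (disjoint), right-total moves $E\subseteq V\times V$, fair moves $E_f\subseteq E$. A play is an infinite sequence $\tau=v_0v_1\ldots$ with $(v_j,v_{j+1})\in E$; $\tau_m=(v_0,v_1)(v_1,v_2)\ldots$; $\mathsf{Inf}$ denotes the set of elements occurring infinitely often. For $i\in\{\exists,\forall\}$, $\tau$ is $i$-fair ($\mathsf{fair}_i(\tau)$) if for all $u\in V_i\cap\mathsf{Inf}(\tau)$, every $(u,u')\in E_f$ is in $\mathsf{Inf}(\tau_m)$. A strategy for player $i$ is a function $p:V^*\cdot V_i\to V$ with $p(w\cdot u)\in E(u)$; it admits a play $v_0v_1\ldots$ if $p(v_0\ldots v_j)=v_{j+1}$ whenever $v_j\in V_i$. $\Sigma$ ($\Pi$) is the set of strategies of $\exists$ ($\forall$); $\mathsf{play}_v(s,t)$ is the unique play from $v$ admitted by both $s$ and $t$. A strategy is $i$-fair if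 every play it admits is $i$-fair; $\Sigma^f$ and $\Pi^f$ denote the sets of $\exists$-fair and $\forall$-fair strategies. *)

theory Defs
  imports Main
begin

definition arena :: "'v set \<Rightarrow> 'v set \<Rightarrow> ('v \<times> 'v) set \<Rightarrow> ('v \<times> 'v) set \<Rightarrow> bool" where
  "arena VE VA E Ef \<longleftrightarrow> finite (VE \<union> VA) \<and> VE \<inter> VA = {} \<and>
     E \<subseteq> (VE \<union> VA) \<times> (VE \<union> VA) \<and> (\<forall>u \<in> VE \<union> VA. \<exists>u'. (u, u') \<in> E) \<and> Ef \<subseteq> E"

definition is_play :: "('v \<times> 'v) set \<Rightarrow> (nat \<Rightarrow> 'v) \<Rightarrow> bool" where
  "is_play E \<tau> \<longleftrightarrow> (\<forall>j. (\<tau> j, \<tau> (Suc j)) \<in> E)"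

definition Inf_nodes :: "(nat \<Rightarrow> 'v) \<Rightarrow> 'v set" where
  "Inf_nodes \<tau> = {u. \<exists>\<^sub>\<infinity>j. \<tau> j = u}"

definition Inf_moves :: "(nat \<Rightarrow> 'v) \<Rightarrow> ('v \<times> 'v) set" where
  "Inf_moves \<tau> = {e. \<exists>\<^sub>\<infinity>j. (\<tau> j, \<tau> (Suc j)) = e}"

definition fair :: "'v set \<Rightarrow> ('v \<times> 'v) set \<Rightarrow> (nat \<Rightarrow> 'v) \<Rightarrow> bool" where
  "fair Vi Ef \<tau> \<longleftrightarrow> (\<forall>u \<in> Vi \<inter> Inf_nodes \<tau>. \<forall>u'. (u, u') \<in> Ef \<longrightarrow> (u, u') \<in> Inf_moves \<tau>)"

text \<open>Strategies of the player owning Vi: functions on histories w\<cdot>u (nonempty lists of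
  nodes, last element u \<in> Vi) choosing a successor of u. Values on other lists are irrelevant.\<close>
definition strategy :: "'v set \<Rightarrow> 'v set \<Rightarrow> ('v \<times> 'v) set \<Rightarrow> ('v list \<Rightarrow> 'v) \<Rightarrow> bool" where
  "strategy V Vi E p \<longleftrightarrow> (\<forall>w u. set w \<subseteq> V \<longrightarrow> u \<in> Vi \<longrightarrow> (u, p (w @ [u])) \<in> E)"

definition prefix :: "(nat \<Rightarrow> 'v) \<Rightarrow> nat \<Rightarrow> 'v list" where
  "prefix \<tau> n = map \<tau> [0..<n]"

definition admits :: "'v set \<Rightarrow> ('v list \<Rightarrow> 'v) \<Rightarrow> (nat \<Rightarrow> 'v) \<Rightarrow> bool" where
  "admits Vi p \<tau> \<longleftrightarrow> (\<forall>j. \<tau> j \<in> Vi \<longrightarrow> p (prefix \<tau> (Suc j)) = \<tau> (Suc j))"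

definition fair_strategy :: "'v set \<Rightarrow> ('v \<times> 'v) set \<Rightarrow> ('v \<times> 'v) set \<Rightarrow> ('v list \<Rightarrow> 'v) \<Rightarrow> bool" where
  "fair_strategy Vi E Ef p \<longleftrightarrow> (\<forall>\<tau>. is_play E \<tau> \<and> admits Vi p \<tau> \<longrightarrow> fair Vi Ef \<tau>)"

fun play_pref :: "'v set \<Rightarrow> ('v list \<Rightarrow> 'v) \<Rightarrow> ('v list \<Rightarrow> 'v) \<Rightarrow> 'v \<Rightarrow> nat \<Rightarrow> 'v list" where
  "play_pref VE s t v 0 = [v]"
| "play_pref VE s t v (Suc n) =
     (let w = play_pref VE s t v n in w @ [if last w \<in> VE then s w else t w])"

definition play :: "'v set \<Rightarrow> 'v \<Rightarrow> ('v list \<Rightarrow> 'v) \<Rightarrow> ('v list \<Rightarrow> 'v) \<Rightarrow> nat \<Rightarrow> 'v" where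
  "play VE v s t n = last (play_pref VE s t v n)"

end

theory Submission
  imports Defs "HOL-Library.Infinite_Set"
begin

definition succs :: "('v \<times> 'v) set \<Rightarrow> 'v \<Rightarrow> 'v list" where
  "succs E u = (SOME l. set l = {u'. (u, u') \<in> E})"

definition rr :: "('v \<times> 'v) set \<Rightarrow> 'v list \<Rightarrow> 'v" where
  "rr E h = succs E (last h) ! (length (filter (\<lambda>x. x = last h) (butlast h)) mod length (succs E (last h)))"

definition fs :: "('v \<times> 'v) set \<Rightarrow> (nat \<Rightarrow> 'v) \<Rightarrow> 'v list \<Rightarrow> 'v" where
  "fs E \<pi> h = (if h \<noteq> [] \<and> h = prefix \<pi> (length h) then \<pi> (length h) else rr E h)"

lemma length_prefix[simp]: "length (prefix \<tau> n) = n"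
  by (simp add: prefix_def)

lemma prefix_Suc_ne[simp]: "prefix \<tau> (Suc n) \<noteq> []"
  by (simp add: prefix_def)

lemma prefix_Suc: "prefix \<tau> (Suc n) = prefix \<tau> n @ [\<tau> n]"
  by (simp add: prefix_def)

lemma prefix_nth: "k < n \<Longrightarrow> prefix \<tau> n ! k = \<tau> k"
  by (simp add: prefix_def)

lemma succs_set:
  assumes "finite E"
  shows "set (succs E u) = {u'. (u, u') \<in> E}"
proof -
  have "finite {u'. (u, u') \<in> E}"
    using assms by (rule finite_subset[rotated, OF finite_imageI[of E snd]]) force
  then have "\<exists>l. set l = {u'. (u, u') \<in> E}" by (rule finite_list)
  then show ?thesis unfolding succs_def by (rule someI_ex)
qed

lemma fs_strategy:
  assumes fin: "finite E" and tot: "\<forall>u \<in> V. \<exists>u'. (u, u') \<in> E" and ViV: "Vi \<subseteq> V"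
    and pl: "is_play E \<pi>"
  shows "strategy V Vi E (fs E \<pi>)"
  unfolding strategy_def
proof (intro allI impI)
  fix w u assume "set w \<subseteq> V" "u \<in> Vi"
  show "(u, fs E \<pi> (w @ [u])) \<in> E"
  proof (cases "w @ [u] = prefix \<pi> (length (w @ [u]))")
    case True
    then have "w @ [u] = prefix \<pi> (length w) @ [\<pi> (length w)]"
      by (simp add: prefix_Suc)
    then have "u = \<pi> (length w)" by simp
    then show ?thesis using True pl unfolding fs_def is_play_def by simp
  next
    case False
    have "u \<in> V" using ViV \<open>u \<in> Vi\<close> by auto
    then obtain u' where "(u, u') \<in> E" using tot by auto
    then have ne: "succs E u \<noteq> []" using succs_set[OF fin, of u] by auto
    then have "succs E u ! (length (filter (\<lambda>x. x = u) w) mod length (succs E u)) \<in> set (succs E u)"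
      by simp
    then show ?thesis using False succs_set[OF fin, of u] unfolding fs_def rr_def by simp
  qed
qed

lemma fs_admits: "admits Vi (fs E \<pi>) \<pi>"
  unfolding admits_def fs_def by simp

lemma rr_fair:
  assumes fin: "finite E" and Ef: "Ef \<subseteq> E"
    and k: "\<forall>j \<ge> k. \<tau> j \<in> Vi \<longrightarrow> \<tau> (Suc j) = rr E (prefix \<tau> (Suc j))"
  shows "fair Vi Ef \<tau>"
  unfolding fair_def
proof (intro ballI allI impI)
  fix u u' assume u: "u \<in> Vi \<inter> Inf_nodes \<tau>" and uu': "(u, u') \<in> Ef"
  define l where "l = succs E u"
  have "u' \<in> set l" using uu' Ef succs_set[OF fin, of u] l_def by auto
  then obtain i where i: "i < length l" "l ! i = u'" by (meson in_set_conv_nth)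
  define f where "f j = length (filter (\<lambda>x. x = u) (prefix \<tau> j))" for j
  have fS: "f (Suc j) = f j + (if \<tau> j = u then 1 else 0)" for j
    by (simp add: f_def prefix_Suc)
  have inf: "\<exists>\<^sub>\<infinity>j. \<tau> j = u" using u by (simp add: Inf_nodes_def)
  have mono: "f a \<le> f b" if "a \<le> b" for a b
    using that by (induction b) (auto simp: fS le_Suc_eq)
  have unb: "\<exists>j. f j > c" for c
  proof (induction c)
    case 0
    from inf obtain j where "\<tau> j = u" by (auto simp: INFM_nat)
    then show ?case using fS[of j] by (intro exI[of _ "Suc j"]) simp
  next
    case (Suc c)
    then obtain j0 where "f j0 > c" by auto
    from inf obtain j where "j > j0" "\<tau> j = u" by (auto simp: INFM_nat)
    then have "f (Suc j) = f j + 1" using fS by simp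
    moreover have "f j \<ge> f j0" using mono \<open>j > j0\<close> by simp
    ultimately show ?case using \<open>f j0 > c\<close> by (intro exI[of _ "Suc j"]) simp
  qed
  show "(u, u') \<in> Inf_moves \<tau>"
    unfolding Inf_moves_def INFM_nat mem_Collect_eq
  proof
    fix m
    define N where "N = Suc (max m k)"
    define c where "c = f N * length l + i"
    have cmod: "c mod length l = i" using i by (simp add: c_def)
    have cge: "c \<ge> f N"
    proof -
      have "1 \<le> length l" using i by simp
      then have "f N * 1 \<le> f N * length l" by (rule mult_le_mono2)
      then show ?thesis unfolding c_def by linarith
    qed
    define j' where "j' = (LEAST j. f j > c)"
    have fj': "f j' > c" using unb LeastI_ex j'_def by metis
    have below: "\<And>j. j < j' \<Longrightarrow> \<not> f j > c" using not_less_Least j'_def by metis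
    have "j' > N"
    proof (rule ccontr)
      assume "\<not> j' > N"
      then have "f j' \<le> f N" using mono by simp
      then show False using fj' cge by simp
    qed
    then obtain j where j: "j' = Suc j" "j \<ge> N" by (cases j') auto
    have "\<not> f j > c" using below j by simp
    then have fj: "f j = c" "\<tau> j = u" using fj' fS[of j] j by (auto split: if_splits)
    have "\<tau> (Suc j) = rr E (prefix \<tau> (Suc j))"
      using k j u fj unfolding N_def by auto
    also have "\<dots> = l ! (c mod length l)"
      using fj unfolding rr_def l_def f_def by (simp add: prefix_Suc)
    also have "\<dots> = u'" using cmod i by simp
    finally show "\<exists>n>m. (\<tau> n, \<tau> (Suc n)) = (u, u')"
      using fj j N_def by (intro exI[of _ j]) auto
  qed
qed

lemma fs_fair:
  assumes fin: "finite E" and Ef: "Ef \<subseteq> E" and pf: "fair Vi Ef \<pi>"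
  shows "fair_strategy Vi E Ef (fs E \<pi>)"
  unfolding fair_strategy_def
proof (intro allI impI)
  fix \<tau> assume a: "is_play E \<tau> \<and> admits Vi (fs E \<pi>) \<tau>"
  show "fair Vi Ef \<tau>"
  proof (cases "\<tau> = \<pi>")
    case True then show ?thesis using pf by simp
  next
    case False
    then obtain k where k: "\<tau> k \<noteq> \<pi> k" by auto
    have "\<forall>j \<ge> k. \<tau> j \<in> Vi \<longrightarrow> \<tau> (Suc j) = rr E (prefix \<tau> (Suc j))"
    proof (intro allI impI)
      fix j assume "k \<le> j" "\<tau> j \<in> Vi"
      have "prefix \<tau> (Suc j) \<noteq> prefix \<pi> (Suc j)"
        using prefix_nth[of k "Suc j" \<tau>] prefix_nth[of k "Suc j" \<pi>] k \<open>k \<le> j\<close> by auto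
      then have "fs E \<pi> (prefix \<tau> (Suc j)) = rr E (prefix \<tau> (Suc j))"
        unfolding fs_def by simp
      then show "\<tau> (Suc j) = rr E (prefix \<tau> (Suc j))"
        using a \<open>\<tau> j \<in> Vi\<close> unfolding admits_def by metis
    qed
    then show ?thesis using rr_fair fin Ef by blast
  qed
qed

lemma last_pp: "last (play_pref VE s t v n) = play VE v s t n"
  by (simp add: play_def)

lemma pp_prefix: "play_pref VE s t v n = prefix (play VE v s t) (Suc n)"
proof (induction n)
  case 0 then show ?case by (simp add: prefix_def play_def)
next
  case (Suc n)
  have "play VE v s t (Suc n) = (let w = play_pref VE s t v n in if last w \<in> VE then s w else t w)"
    by (simp add: play_def Let_def)
  then show ?case using Suc by (simp add: prefix_Suc[of _ "Suc n"] Let_def)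
qed

lemma play_step: "play VE v s t (Suc n) =
   (if play VE v s t n \<in> VE then s (prefix (play VE v s t) (Suc n)) else t (prefix (play VE v s t) (Suc n)))"
  by (simp add: play_def Let_def pp_prefix[symmetric])

lemma play_is_play:
  assumes E: "E \<subseteq> V \<times> V" and VEA: "V = VE \<union> VA" and v: "v \<in> V"
    and s: "strategy V VE E s" and t: "strategy V VA E t"
  shows "is_play E (play VE v s t)" "\<And>n. play VE v s t n \<in> V"
proof -
  let ?p = "play VE v s t"
  have edge: "(?p n, ?p (Suc n)) \<in> E" if "\<forall>k\<le>n. ?p k \<in> V" for n
  proof -
    have sw: "set (prefix ?p n) \<subseteq> V" using that by (auto simp: prefix_def)
    have eq: "prefix ?p (Suc n) = prefix ?p n @ [?p n]" by (rule prefix_Suc)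
    show ?thesis
    proof (cases "?p n \<in> VE")
      case True then show ?thesis using s sw unfolding strategy_def
        by (subst play_step) (simp add: eq)
    next
      case False
      then have "?p n \<in> VA" using that VEA by auto
      then show ?thesis using t sw False unfolding strategy_def
        by (subst play_step) (simp add: eq)
    qed
  qed
  have all: "\<forall>k\<le>n. ?p k \<in> V" for n
  proof (induction n)
    case 0 then show ?case using v by (simp add: play_def)
  next
    case (Suc n)
    then have "?p (Suc n) \<in> V" using edge[OF Suc] E by auto
    then show ?case using Suc le_Suc_eq by auto
  qed
  then show "is_play E ?p" using edge unfolding is_play_def by blast
  show "\<And>n. ?p n \<in> V" using all by blast
qed

lemma play_same_t:
  assumes "\<And>n. play VE v s t n \<in> VE \<union> VA"
    and "admits VA t' (play VE v s t)"
  shows "play VE v s t = play VE v s t'"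
proof -
  have "play_pref VE s t' v n = play_pref VE s t v n" for n
  proof (induction n)
    case 0 then show ?case by simp
  next
    case (Suc n)
    let ?w = "play_pref VE s t v n"
    have "last ?w \<notin> VE \<Longrightarrow> t' ?w = t ?w"
    proof -
      assume "last ?w \<notin> VE"
      then have "play VE v s t n \<in> VA" using assms(1)[of n] by (simp add: last_pp)
      then have "t' (prefix (play VE v s t) (Suc n)) = play VE v s t (Suc n)"
        using assms(2) unfolding admits_def by blast
      then show ?thesis using \<open>last ?w \<notin> VE\<close>
        by (simp add: play_step pp_prefix[symmetric] last_pp)
    qed
    then show ?case using Suc by (simp add: Let_def)
  qed
  then show ?thesis unfolding play_def by (simp add: fun_eq_iff)
qed

lemma play_same_s:
  assumes "admits VE s' (play VE v s t)"
  shows "play VE v s t = play VE v s' t"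
proof -
  have "play_pref VE s' t v n = play_pref VE s t v n" for n
  proof (induction n)
    case 0 then show ?case by simp
  next
    case (Suc n)
    let ?w = "play_pref VE s t v n"
    have "last ?w \<in> VE \<Longrightarrow> s' ?w = s ?w"
    proof -
      assume "last ?w \<in> VE"
      then have "play VE v s t n \<in> VE" by (simp add: last_pp)
      then have "s' (prefix (play VE v s t) (Suc n)) = play VE v s t (Suc n)"
        using assms unfolding admits_def by blast
      then show ?thesis using \<open>last ?w \<in> VE\<close>
        by (simp add: play_step pp_prefix[symmetric] last_pp)
    qed
    then show ?case using Suc by (simp add: Let_def)
  qed
  then show ?thesis unfolding play_def by (simp add: fun_eq_iff)
qed

theorem lemma1:
  fixes VE VA :: "'v set" and E Ef :: "('v \<times> 'v) set"
    and v :: 'v and s t :: "'v list \<Rightarrow> 'v"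
  assumes "arena VE VA E Ef"
    and "v \<in> VE \<union> VA"
    and "strategy (VE \<union> VA) VE E s"
    and "strategy (VE \<union> VA) VA E t"
  shows "(fair VA Ef (play VE v s t) \<longrightarrow>
           (\<exists>t'. strategy (VE \<union> VA) VA E t' \<and> fair_strategy VA E Ef t' \<and>
                 play VE v s t = play VE v s t'))
       \<and> (fair VE Ef (play VE v s t) \<longrightarrow>
           (\<exists>s'. strategy (VE \<union> VA) VE E s' \<and> fair_strategy VE E Ef s' \<and>
                 play VE v s t = play VE v s' t))"
proof -
  let ?V = "VE \<union> VA"
  let ?p = "play VE v s t"
  have ar: "finite ?V" "E \<subseteq> ?V \<times> ?V" "\<forall>u \<in> ?V. \<exists>u'. (u, u') \<in> E" "Ef \<subseteq> E"
    using assms(1) unfolding arena_def by auto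
  have fin: "finite E" using ar(1,2) finite_subset by blast
  have pl: "is_play E ?p" and inV: "\<And>n. ?p n \<in> ?V"
    using play_is_play[OF ar(2) refl assms(2-4)] by auto
  show ?thesis
  proof (intro conjI impI)
    assume f: "fair VA Ef ?p"
    show "\<exists>t'. strategy ?V VA E t' \<and> fair_strategy VA E Ef t' \<and> ?p = play VE v s t'"
      by (intro exI[of _ "fs E ?p"] conjI fs_strategy[OF fin ar(3) _ pl] fs_fair[OF fin ar(4) f]
          play_same_t[OF inV fs_admits]) auto
  next
    assume f: "fair VE Ef ?p"
    show "\<exists>s'. strategy ?V VE E s' \<and> fair_strategy VE E Ef s' \<and> ?p = play VE v s' t"
      by (intro exI[of _ "fs E ?p"] conjI fs_strategy[OF fin ar(3) _ pl] fs_fair[OF fin ar(4) f]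
          play_same_s[OF fs_admits]) auto
  qed
qed

end
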